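(* Let $\mathbb{S}=[0,1]$ with $0$ and $1$ identified, and let $H:\mathbb{S}\times\mathbb{R}\times\mathbb{R}\to\mathbb{R}$ be $C^\infty$ with $\frac{\partial^2H}{\partial p^2}>0$, $p\mapsto H(x,p,u)$ superlinear for each $(x,u)$, and $|\frac{\partial H}{\partial u}|\le\kappa$ for some $\kappa>0$. Let $u_0$ be a viscosity solution of $H(x,u'(x),u(x))=0$ on $\mathbb{S}$ such that $\frac{\partial H}{\partial p}(x,u_0'(x),u_0(x))\ne0$ at every differentiability point $x$ of $u_0$. Set $B(x)=\frac{\partial H}{\partial p}(x,u_0'(x),u_0(x))$, $$\mu=\frac{\int_0^1\frac{\partial H}{\partial u}(\tau,u_0'(\tau),u_0(\tau))B(\tau)^{-1}d\tau}{\int_0^1B(\tau)^{-1}d\tau},\qquad \rho(x)=\exp\left\{\int_0^x\frac{\mu-\frac{\partial H}{\partial u}(\tau,u_0'(\tau),u_0(\tau))}{B(\tau)}\,d\tau\right\}.$$ Assume $\mu>0$. For given $\Theta\in[0,\mu)$ set $w_\epsilon(x,t)=u_0(x)-\epsilon\rho(x)e^{-\Theta t}$. Then there exists $\tilde\epsilon_0=\tilde\epsilon_0(\Theta)>0$ such that: (1) for $\epsilon\in(0,\tilde\epsilon_0]$, $\partial_tw_\epsilon(x,t)+H(x,\partial_xw_\epsilon(x,t),w_\epsilon(x,t))\le0$ for all $(x,t)\in\mathbb{S}\times[0,+\infty)$; (2) for $\epsilon\in[-\tilde\epsilon_0,0)$, $\partial_tw_\epsilon(x,t)+H(x,\partial_xw_\epsilon(x,t),w_\epsilon(x,t))\ge0$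 for all $(x,t)\in\mathbb{S}\times[0,+\infty)$.
   Context: It is known that under these assumptions $u_0$ is of class $C^\infty$, so $B$ is smooth and nowhere zero, $\rho$ is a smooth positive function on $\mathbb{S}$, and $w_\epsilon$ is $C^\infty$ on $\mathbb{S}\times[0,\infty)$. *)

theory Defs
  imports "HOL-Analysis.Analysis"
begin

definition dir_deriv :: "'a::real_normed_vector \<Rightarrow> ('a \<Rightarrow> real) \<Rightarrow> 'a \<Rightarrow> real" where
  "dir_deriv v f = (\<lambda>x. frechet_derivative f (at x) v)"

definition smooth_everywhere :: "('a::real_normed_vector \<Rightarrow> real) \<Rightarrow> bool" where
  "smooth_everywhere f \<longleftrightarrow> (\<forall>vs x. (foldr dir_deriv vs f) differentiable (at x))"

text \<open>Functions on the circle S = [0,1]/(0~1) are represented as 1-periodic functions on R.\<close>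
definition periodic1 :: "(real \<Rightarrow> 'b) \<Rightarrow> bool" where
  "periodic1 f \<longleftrightarrow> (\<forall>x. f (x + 1) = f x)"

definition Hp :: "(real \<Rightarrow> real \<Rightarrow> real \<Rightarrow> real) \<Rightarrow> real \<Rightarrow> real \<Rightarrow> real \<Rightarrow> real" where
  "Hp H x p u = deriv (\<lambda>q. H x q u) p"
definition Hu :: "(real \<Rightarrow> real \<Rightarrow> real \<Rightarrow> real) \<Rightarrow> real \<Rightarrow> real \<Rightarrow> real \<Rightarrow> real" where
  "Hu H x p u = deriv (\<lambda>v. H x p v) u"
definition Hpp :: "(real \<Rightarrow> real \<Rightarrow> real \<Rightarrow> real) \<Rightarrow> real \<Rightarrow> real \<Rightarrow> real \<Rightarrow> real" where
  "Hpp H x p u = deriv (\<lambda>q. Hp H x q u) p"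

definition viscosity_solution_S :: "(real \<Rightarrow> real \<Rightarrow> real \<Rightarrow> real) \<Rightarrow> (real \<Rightarrow> real) \<Rightarrow> bool" where
  "viscosity_solution_S H u \<longleftrightarrow> continuous_on UNIV u \<and> periodic1 u \<and>
    (\<forall>x \<phi>. ((\<forall>y. \<phi> differentiable (at y)) \<and> continuous_on UNIV (deriv \<phi>)) \<longrightarrow>
       (((\<forall>\<^sub>F y in nhds x. u y - \<phi> y \<le> u x - \<phi> x) \<longrightarrow> H x (deriv \<phi> x) (u x) \<le> 0) \<and>
        ((\<forall>\<^sub>F y in nhds x. u y - \<phi> y \<ge> u x - \<phi> x) \<longrightarrow> H x (deriv \<phi> x) (u x) \<ge> 0)))"

definition oint0 :: "(real \<Rightarrow> real) \<Rightarrow> real \<Rightarrow> real" where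
  "oint0 f x = (if 0 \<le> x then integral {0..x} f else - integral {x..0} f)"

end

theory Submission
  imports Defs
begin

lemma line_deriv:
  fixes f :: "'a::real_normed_vector \<Rightarrow> real"
  assumes "f differentiable (at (a + s0 *\<^sub>R v))"
  shows "((\<lambda>s. f (a + s *\<^sub>R v)) has_real_derivative frechet_derivative f (at (a + s0 *\<^sub>R v)) v) (at s0)"
proof -
  let ?L = "frechet_derivative f (at (a + s0 *\<^sub>R v))"
  have L: "(f has_derivative ?L) (at (a + s0 *\<^sub>R v))" using assms frechet_derivative_works by blast
  have lin: "linear ?L" using assms linear_frechet_derivative by blast
  have i: "((\<lambda>s. a + s *\<^sub>R v) has_derivative (\<lambda>h. h *\<^sub>R v)) (at s0)"
    by (auto intro!: derivative_eq_intros)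
  have "((\<lambda>s. f (a + s *\<^sub>R v)) has_derivative (\<lambda>h. ?L (h *\<^sub>R v))) (at s0)"
    using has_derivative_compose[OF i L] by simp
  moreover have "(\<lambda>h. ?L (h *\<^sub>R v)) = (*) (?L v)"
    using linear_scale[OF lin] by (auto simp: fun_eq_iff)
  ultimately show ?thesis by (simp add: has_field_derivative_def)
qed

lemma smooth_diff: "smooth_everywhere f \<Longrightarrow> f differentiable (at z)"
  unfolding smooth_everywhere_def by (metis foldr.simps(1) id_apply)

lemma smooth_cont: "smooth_everywhere f \<Longrightarrow> continuous_on UNIV (\<lambda>z. frechet_derivative f (at z) v)"
proof -
  assume s: "smooth_everywhere f"
  have "\<forall>z. (dir_deriv v f) differentiable (at z)"
    using s unfolding smooth_everywhere_def by (metis foldr.simps(1) foldr_Cons id_apply o_apply)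
  hence "continuous_on UNIV (dir_deriv v f)"
    by (simp add: continuous_at_imp_continuous_on differentiable_imp_continuous_within)
  thus ?thesis unfolding dir_deriv_def .
qed

lemma smooth_deriv_real:
  fixes u :: "real \<Rightarrow> real"
  assumes "smooth_everywhere u"
  shows "(u has_real_derivative frechet_derivative u (at x) 1) (at x)"
  using line_deriv[of u 0 x 1] smooth_diff[OF assms] by simp

lemma oint0_deriv:
  fixes g :: "real \<Rightarrow> real"
  assumes g: "continuous_on UNIV g" and x: "x > -1"
  shows "(oint0 g has_real_derivative g x) (at x)"
proof -
  define I where "I y = integral {-1..y} g" for y
  have int: "g integrable_on {a..b}" for a b
    using g by (meson continuous_on_subset integrable_continuous_interval subset_UNIV)
  have eq: "oint0 g y = I y - I 0" if "y \<in> {-1<..}" for y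
  proof (cases "0 \<le> y")
    case True
    have "integral {-1..0} g + integral {0..y} g = integral {-1..y} g"
      using Henstock_Kurzweil_Integration.integral_combine[OF _ _ int, of "-1" 0 y] True by simp
    then show ?thesis using True unfolding oint0_def I_def by simp
  next
    case False
    have "integral {-1..y} g + integral {y..0} g = integral {-1..0} g"
      using Henstock_Kurzweil_Integration.integral_combine[OF _ _ int, of "-1" y 0] False that by simp
    then show ?thesis using False unfolding oint0_def I_def by simp
  qed
  have "(I has_real_derivative g x) (at x within {-1..x+1})"
    unfolding I_def
    by (rule integral_has_real_derivative) (use g x in \<open>auto intro: continuous_on_subset\<close>)
  moreover have "at x within {-1..x+1} = at x"
    by (rule at_within_interior) (use x in auto)
  ultimately have "((\<lambda>y. I y - I 0) has_real_derivative g x) (at x)"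
    by (auto intro!: derivative_eq_intros)
  thus ?thesis
    by (rule has_field_derivative_transform_within_open[of _ _ _ "{-1<..}"]) (use x eq in auto)
qed


theorem lemma2p3:
  fixes H :: "real \<Rightarrow> real \<Rightarrow> real \<Rightarrow> real"
    and u0 :: "real \<Rightarrow> real"
    and \<kappa> \<Theta> :: real
    and B \<rho> :: "real \<Rightarrow> real"
    and \<mu> :: real
    and w :: "real \<Rightarrow> real \<Rightarrow> real \<Rightarrow> real"
  assumes H_smooth: "smooth_everywhere (\<lambda>(x, p, u). H x p u)"
    and H_per: "\<forall>p u. periodic1 (\<lambda>x. H x p u)"
    and H_convex: "\<forall>x p u. Hpp H x p u > 0"
    and H_superlinear: "\<forall>x u. filterlim (\<lambda>p. H x p u / \<bar>p\<bar>) at_top at_infinity"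
    and kappa_pos: "\<kappa> > 0"
    and Hu_bound: "\<forall>x p u. \<bar>Hu H x p u\<bar> \<le> \<kappa>"
    and u0_visc: "viscosity_solution_S H u0"
    and u0_smooth: "smooth_everywhere u0"
    and B_nonzero: "\<forall>x. u0 differentiable (at x) \<longrightarrow> Hp H x (deriv u0 x) (u0 x) \<noteq> 0"
    and B_def: "B = (\<lambda>x. Hp H x (deriv u0 x) (u0 x))"
    and mu_def: "\<mu> = integral {0..1} (\<lambda>\<tau>. Hu H \<tau> (deriv u0 \<tau>) (u0 \<tau>) / B \<tau>)
                     / integral {0..1} (\<lambda>\<tau>. 1 / B \<tau>)"
    and rho_def: "\<rho> = (\<lambda>x. exp (oint0 (\<lambda>\<tau>. (\<mu> - Hu H \<tau> (deriv u0 \<tau>) (u0 \<tau>)) / B \<tau>) x))"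
    and mu_pos: "\<mu> > 0"
    and Theta: "0 \<le> \<Theta>" "\<Theta> < \<mu>"
    and w_def: "w = (\<lambda>\<epsilon> x t. u0 x - \<epsilon> * \<rho> x * exp (- \<Theta> * t))"
  shows "\<exists>\<epsilon>0 > 0.
     (\<forall>\<epsilon> \<in> {0<..\<epsilon>0}. \<forall>x \<in> {0..1}. \<forall>t \<ge> 0.
        deriv (\<lambda>s. w \<epsilon> x s) t + H x (deriv (\<lambda>y. w \<epsilon> y t) x) (w \<epsilon> x t) \<le> 0) \<and>
     (\<forall>\<epsilon> \<in> {-\<epsilon>0..<0}. \<forall>x \<in> {0..1}. \<forall>t \<ge> 0.
        deriv (\<lambda>s. w \<epsilon> x s) t + H x (deriv (\<lambda>y. w \<epsilon> y t) x) (w \<epsilon> x t) \<ge> 0)"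
proof -
  define f where "f = (\<lambda>(x, p, u). H x p u)"
  have fH: "f (x, p, u) = H x p u" for x p u by (simp add: f_def)
  have fdiff: "f differentiable (at z)" for z using smooth_diff[OF H_smooth] f_def by simp
  define D2 where "D2 z = frechet_derivative f (at z) (0, 1, 0)" for z
  define D3 where "D3 z = frechet_derivative f (at z) (0, 0, 1)" for z
  have cD2: "continuous_on UNIV D2" unfolding D2_def f_def by (rule smooth_cont[OF H_smooth])
  have cD3: "continuous_on UNIV D3" unfolding D3_def f_def by (rule smooth_cont[OF H_smooth])
  have Hp_eq: "Hp H x p u = D2 (x, p, u)" for x p u
  proof -
    have "((\<lambda>s. f ((x, 0, u) + s *\<^sub>R (0, 1, 0))) has_real_derivative
            frechet_derivative f (at ((x, 0, u) + p *\<^sub>R (0, 1, 0))) (0, 1, 0)) (at p)"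
      by (rule line_deriv) (rule fdiff)
    hence "((\<lambda>q. H x q u) has_real_derivative D2 (x, p, u)) (at p)"
      by (simp add: fH D2_def)
    thus ?thesis unfolding Hp_def by (rule DERIV_imp_deriv)
  qed
  have Hu_eq: "Hu H x p u = D3 (x, p, u)" for x p u
  proof -
    have "((\<lambda>s. f ((x, p, 0) + s *\<^sub>R (0, 0, 1))) has_real_derivative
            frechet_derivative f (at ((x, p, 0) + u *\<^sub>R (0, 0, 1))) (0, 0, 1)) (at u)"
      by (rule line_deriv) (rule fdiff)
    hence "((\<lambda>v. H x p v) has_real_derivative D3 (x, p, u)) (at u)"
      by (simp add: fH D3_def)
    thus ?thesis unfolding Hu_def by (rule DERIV_imp_deriv)
  qed
  define u0' where "u0' = deriv u0"
  have u0d: "(u0 has_real_derivative u0' x) (at x)" for x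
  proof -
    have "(u0 has_real_derivative frechet_derivative u0 (at x) 1) (at x)"
      by (rule smooth_deriv_real[OF u0_smooth])
    thus ?thesis unfolding u0'_def using DERIV_imp_deriv by metis
  qed
  have u0'_eq: "u0' = (\<lambda>x. frechet_derivative u0 (at x) 1)"
    unfolding u0'_def using DERIV_imp_deriv smooth_deriv_real[OF u0_smooth] by blast
  have cu0': "continuous_on UNIV u0'" unfolding u0'_eq by (rule smooth_cont[OF u0_smooth])
  have cu0: "continuous_on UNIV u0" using u0_visc unfolding viscosity_solution_S_def by blast
  have u0diff: "u0 differentiable (at x)" for x by (rule smooth_diff[OF u0_smooth])
  have H0: "H x (u0' x) (u0 x) = 0" for x
  proof -
    have pre: "(\<forall>y. u0 differentiable (at y)) \<and> continuous_on UNIV (deriv u0)"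
      using u0diff cu0' unfolding u0'_def by blast
    have "H x (deriv u0 x) (u0 x) \<le> 0" "H x (deriv u0 x) (u0 x) \<ge> 0"
      using u0_visc pre unfolding viscosity_solution_S_def by auto
    thus ?thesis unfolding u0'_def by linarith
  qed
  define zz where "zz x = (x, u0' x, u0 x)" for x
  have czz: "continuous_on UNIV zz" unfolding zz_def
    by (intro continuous_intros cu0' cu0)
  have Bz: "B x = D2 (zz x)" for x unfolding B_def zz_def u0'_def Hp_eq ..
  have Bnz: "D2 (zz x) \<noteq> 0" for x using B_nonzero u0diff Bz B_def by metis
  define g where "g \<tau> = (\<mu> - D3 (zz \<tau>)) / D2 (zz \<tau>)" for \<tau>
  have cg: "continuous_on UNIV g" unfolding g_def
    by (intro continuous_intros continuous_on_compose2[OF cD2 czz] continuous_on_compose2[OF cD3 czz]) (auto simp: Bnz)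
  have rho_eq: "\<rho> = (\<lambda>x. exp (oint0 g x))"
    unfolding rho_def g_def
    by (simp add: Hu_eq Bz zz_def u0'_def)
  define \<rho>' where "\<rho>' x = \<rho> x * g x" for x
  have rhod: "(\<rho> has_real_derivative \<rho>' x) (at x)" if "x > -1" for x
    unfolding rho_eq \<rho>'_def
    using oint0_deriv[OF cg that] by (auto intro!: derivative_eq_intros)
  have rpos: "\<rho> x > 0" for x unfolding rho_eq by simp
  have crho: "continuous_on {0..1} \<rho>"
    proof (intro continuous_at_imp_continuous_on ballI)
    fix x :: real assume "x \<in> {0..1}"
    thus "isCont \<rho> x" using rhod[of x] DERIV_isCont by force
  qed
  have crho': "continuous_on {0..1} \<rho>'"
    unfolding \<rho>'_def by (intro continuous_intros crho continuous_on_subset[OF cg]) auto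
  have key: "D2 (zz x) * \<rho>' x + D3 (zz x) * \<rho> x = \<mu> * \<rho> x" for x
    unfolding \<rho>'_def g_def using Bnz[of x] by (simp add: field_simps)
  define z where "z x \<xi> = (x, u0' x - \<xi> * \<rho>' x, u0 x - \<xi> * \<rho> x)" for x \<xi>
  define G where "G x \<xi> = \<Theta> * \<rho> x - \<rho>' x * D2 (z x \<xi>) - \<rho> x * D3 (z x \<xi>)" for x \<xi>
  define F where "F x \<delta> = \<Theta> * \<delta> * \<rho> x + H x (u0' x - \<delta> * \<rho>' x) (u0 x - \<delta> * \<rho> x)" for x \<delta>
  have Fd: "(F x has_real_derivative G x \<xi>) (at \<xi>)" for x \<xi>
  proof -
    let ?a = "(x, u0' x, u0 x)" and ?v = "(0, - \<rho>' x, - \<rho> x)"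
    have ea: "?a + \<xi> *\<^sub>R ?v = z x \<xi>" by (simp add: z_def)
    have d: "((\<lambda>s. f (?a + s *\<^sub>R ?v)) has_real_derivative frechet_derivative f (at (?a + \<xi> *\<^sub>R ?v)) ?v) (at \<xi>)"
      by (rule line_deriv) (rule fdiff)
    have lin: "linear (frechet_derivative f (at (z x \<xi>)))"
      using linear_frechet_derivative fdiff by blast
    have vv: "?v = (- \<rho>' x) *\<^sub>R (0, 1, 0) + (- \<rho> x) *\<^sub>R (0, 0, 1)" by simp
    have "frechet_derivative f (at (z x \<xi>)) ?v = - \<rho>' x * D2 (z x \<xi>) - \<rho> x * D3 (z x \<xi>)"
      unfolding D2_def D3_def
      by (subst vv, simp only: linear_add[OF lin] linear_scale[OF lin]) simp
    with d ea have "((\<lambda>s. f (?a + s *\<^sub>R ?v)) has_real_derivative - \<rho>' x * D2 (z x \<xi>) - \<rho> x * D3 (z x \<xi>)) (at \<xi>)"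
      by simp
    hence hh: "((\<lambda>s. H x (u0' x - s * \<rho>' x) (u0 x - s * \<rho> x)) has_real_derivative - \<rho>' x * D2 (z x \<xi>) - \<rho> x * D3 (z x \<xi>)) (at \<xi>)"
      by (simp add: fH algebra_simps)
    have "((\<lambda>s. \<Theta> * s * \<rho> x + H x (u0' x - s * \<rho>' x) (u0 x - s * \<rho> x)) has_real_derivative
             \<Theta> * 1 * \<rho> x + (- \<rho>' x * D2 (z x \<xi>) - \<rho> x * D3 (z x \<xi>))) (at \<xi>)"
      by (rule DERIV_add[OF _ hh]) (auto intro!: derivative_eq_intros)
    thus ?thesis unfolding F_def G_def by (simp add: algebra_simps)
  qed
  have F0: "F x 0 = 0" for x unfolding F_def using H0 by simp
  have G0: "G x 0 = (\<Theta> - \<mu>) * \<rho> x" for x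
    using key[of x] unfolding G_def z_def zz_def by (simp add: algebra_simps)
  define K where "K = {0..1::real} \<times> {-1..1::real}"
  have cG: "continuous_on K (\<lambda>q. G (fst q) (snd q))"
  proof -
    have c1: "continuous_on K (\<lambda>q. \<rho> (fst q))"
      by (rule continuous_on_compose2[OF crho]) (auto simp: K_def intro!: continuous_intros)
    have c2: "continuous_on K (\<lambda>q. \<rho>' (fst q))"
      by (rule continuous_on_compose2[OF crho']) (auto simp: K_def intro!: continuous_intros)
    have c3: "continuous_on K (\<lambda>q. u0' (fst q))"
      by (rule continuous_on_compose2[OF cu0']) (auto intro!: continuous_intros)
    have c4: "continuous_on K (\<lambda>q. u0 (fst q))"
      by (rule continuous_on_compose2[OF cu0]) (auto intro!: continuous_intros)
    have cz: "continuous_on K (\<lambda>q. z (fst q) (snd q))"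
      unfolding z_def by (intro continuous_intros c1 c2 c3 c4)
    show ?thesis unfolding G_def
      by (intro continuous_intros c1 c2 continuous_on_compose2[OF cD2 cz] continuous_on_compose2[OF cD3 cz]) auto
  qed
  have "compact K" unfolding K_def by (intro compact_Times compact_Icc)
  hence uc: "uniformly_continuous_on K (\<lambda>q. G (fst q) (snd q))"
    using cG compact_uniformly_continuous by blast
  obtain xm where xm: "xm \<in> {0..1}" "\<forall>y\<in>{0..1}. \<rho> xm \<le> \<rho> y"
    using continuous_attains_inf[OF compact_Icc _ crho] by auto
  define m where "m = (\<mu> - \<Theta>) * \<rho> xm"
  have mpos: "m > 0" unfolding m_def using Theta rpos by simp
  have Gm: "G x 0 \<le> - m" if "x \<in> {0..1}" for x
  proof -
    have "(\<mu> - \<Theta>) * \<rho> xm \<le> (\<mu> - \<Theta>) * \<rho> x"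
      using xm that Theta by (intro mult_left_mono) auto
    thus ?thesis unfolding G0 m_def by (simp add: algebra_simps)
  qed
  obtain d where d: "d > 0" "\<forall>a\<in>K. \<forall>b\<in>K. dist b a < d \<longrightarrow> dist (G (fst b) (snd b)) (G (fst a) (snd a)) < m"
    using uc mpos unfolding uniformly_continuous_on_def by metis
  define e0 where "e0 = min 1 (d / 2)"
  have e0pos: "e0 > 0" unfolding e0_def using d by simp
  have Gneg: "G x \<xi> < 0" if "x \<in> {0..1}" "\<bar>\<xi>\<bar> \<le> e0" for x \<xi>
  proof -
    have inK: "(x, \<xi>) \<in> K" "(x, 0) \<in> K" using that unfolding K_def e0_def by auto
    have "dist (x, \<xi>) (x, 0) = \<bar>\<xi>\<bar>" by (simp add: dist_Pair_Pair dist_real_def)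
    also have "\<dots> < d" using that d unfolding e0_def by linarith
    finally have "dist (G x \<xi>) (G x 0) < m" using d inK by fastforce
    thus ?thesis using Gm[OF that(1)] by (simp add: dist_real_def)
  qed
  have Fpos: "F x \<delta> \<le> 0" if hyp: "x \<in> {0..1}" "0 < \<delta>" "\<delta> \<le> e0" for x \<delta>
  proof -
    obtain \<xi> where "0 < \<xi>" "\<xi> < \<delta>" "F x \<delta> - F x 0 = (\<delta> - 0) * G x \<xi>"
      using MVT2[of 0 \<delta> "F x" "G x"] Fd hyp(2) by blast
    moreover have "G x \<xi> < 0" using Gneg[OF hyp(1)] \<open>0 < \<xi>\<close> \<open>\<xi> < \<delta>\<close> hyp by auto
    ultimately show ?thesis using F0[of x] hyp(2) by (simp add: mult_pos_neg mult_neg_neg less_imp_le)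
  qed
  have Fneg: "F x \<delta> \<ge> 0" if hyp: "x \<in> {0..1}" "\<delta> < 0" "- e0 \<le> \<delta>" for x \<delta>
  proof -
    obtain \<xi> where "\<delta> < \<xi>" "\<xi> < 0" "F x 0 - F x \<delta> = (0 - \<delta>) * G x \<xi>"
      using MVT2[of \<delta> 0 "F x" "G x"] Fd hyp(2) by blast
    moreover have "G x \<xi> < 0" using Gneg[OF hyp(1)] \<open>\<delta> < \<xi>\<close> \<open>\<xi> < 0\<close> hyp by auto
    ultimately show ?thesis using F0[of x] hyp(2) by (simp add: mult_pos_neg mult_neg_neg less_imp_le)
  qed
  have LHS: "deriv (\<lambda>s. w \<epsilon> x s) t + H x (deriv (\<lambda>y. w \<epsilon> y t) x) (w \<epsilon> x t) = F x (\<epsilon> * exp (- \<Theta> * t))"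
    if "x \<in> {0..1}" for \<epsilon> x t
  proof -
    have "((\<lambda>s. w \<epsilon> x s) has_real_derivative \<Theta> * (\<epsilon> * exp (- \<Theta> * t)) * \<rho> x) (at t)"
      unfolding w_def by (auto intro!: derivative_eq_intros simp: algebra_simps)
    hence e1: "deriv (\<lambda>s. w \<epsilon> x s) t = \<Theta> * (\<epsilon> * exp (- \<Theta> * t)) * \<rho> x" by (rule DERIV_imp_deriv)
    have "x > -1" using that by auto
    have "((\<lambda>y. w \<epsilon> y t) has_real_derivative u0' x - (\<epsilon> * exp (- \<Theta> * t)) * \<rho>' x) (at x)"
      unfolding w_def using u0d[of x] rhod[OF \<open>x > -1\<close>]
      by (auto intro!: derivative_eq_intros simp: algebra_simps)
    hence e2: "deriv (\<lambda>y. w \<epsilon> y t) x = u0' x - (\<epsilon> * exp (- \<Theta> * t)) * \<rho>' x" by (rule DERIV_imp_deriv)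
    have e3: "w \<epsilon> x t = u0 x - (\<epsilon> * exp (- \<Theta> * t)) * \<rho> x" unfolding w_def by simp
    show ?thesis unfolding e1 e2 e3 F_def ..
  qed
  have expb: "0 < exp (- \<Theta> * t) \<and> exp (- \<Theta> * t) \<le> 1" if "t \<ge> 0" for t
    using that Theta by simp
  show ?thesis
  proof (intro exI[of _ e0] conjI e0pos ballI allI impI)
    fix \<epsilon> x t :: real assume h: "\<epsilon> \<in> {0<..e0}" "x \<in> {0..1}" "(0::real) \<le> t"
    have "0 < \<epsilon> * exp (- \<Theta> * t)" "\<epsilon> * exp (- \<Theta> * t) \<le> e0"
      using h expb[OF h(3)] by (auto intro: mult_le_one order_trans[OF mult_right_le_one_le])
    thus "deriv (\<lambda>s. w \<epsilon> x s) t + H x (deriv (\<lambda>y. w \<epsilon> y t) x) (w \<epsilon> x t) \<le> 0"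
      using LHS[OF h(2)] Fpos[OF h(2)] by simp
  next
    fix \<epsilon> x t :: real assume h: "\<epsilon> \<in> {-e0..<0}" "x \<in> {0..1}" "(0::real) \<le> t"
    have "\<epsilon> * exp (- \<Theta> * t) < 0" "- e0 \<le> \<epsilon> * exp (- \<Theta> * t)"
    proof -
      have E: "0 < exp (- \<Theta> * t)" "exp (- \<Theta> * t) \<le> 1" using expb[OF h(3)] by auto
      have "\<epsilon> * 1 \<le> \<epsilon> * exp (- \<Theta> * t)"
        using E h(1) by (intro mult_left_mono_neg) auto
      moreover have "- e0 \<le> \<epsilon>" using h(1) by simp
      ultimately show "- e0 \<le> \<epsilon> * exp (- \<Theta> * t)" by linarith
      show "\<epsilon> * exp (- \<Theta> * t) < 0"
        using E h(1) by (auto simp: mult_neg_pos)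
    qed
    thus "deriv (\<lambda>s. w \<epsilon> x s) t + H x (deriv (\<lambda>y. w \<epsilon> y t) x) (w \<epsilon> x t) \<ge> 0"
      using LHS[OF h(2)] Fneg[OF h(2)] by simp
  qed
qed

end
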